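(* Let $\mathcal{I}$ be a differentially homogeneous prime differential ideal of $\mathcal{F}\{y_0,\ldots,y_n\}$ (with $\mathcal{I}\neq\mathcal{F}\{y_0,\ldots,y_n\}$). Then every parametric set of $\mathcal{I}$ is nonempty; i.e., there is some index $i$ with $\mathcal{I}\cap\mathcal{F}\{y_i\}=\{0\}$.
   Context: $\mathcal{F}$ is an ordinary differential field. For a differential ideal $\mathcal{I}$ of $\mathcal{F}\{\mathbb{Y}\}=\mathcal{F}\{y_0,\ldots,y_n\}$, $\mathcal{I}:(\mathbb{Y})=\{f: y_jf\in\mathcal{I}\text{ for all }0\le j\le n\}$. $\mathcal{I}$ is called differentially homogeneous if $\mathcal{I}:(\mathbb{Y})=\mathcal{I}$ and for every $P\in\mathcal{I}$ and a new differential indeterminate $t$, $P(ty_0,\ldots,ty_n)$ belongs to the differential ideal generated by $\mathcal{I}$ in $\mathcal{F}\{t,y_0,\ldots,y_n\}$ (i.e. $P(t\mathbb{Y})\in\mathcal{F}\{t\}\mathcal{I}$). A subset $\mathbb{U}\subset\{y_0,\ldots,y_n\}$ is differentially independent modulo $\mathcal{I}$ if $\mathcal{I}\cap\mathcal{F}\{\mathbb{U}\}=\{0\}$; a parametric set of $\mathcal{I}$ is a maximal such subset. *)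

theory Defs
  imports Main "HOL-Library.Poly_Mapping"
begin

text \<open>Differential polynomials over a coefficient field 'a in the differential
indeterminates indexed by 'v: ordinary polynomials in the (infinitely many)
algebraic indeterminates (v,k), where (v,k) stands for the k-th derivative of y_v.\<close>

type_synonym ('v, 'a) dpoly = "(('v \<times> nat) \<Rightarrow>\<^sub>0 nat) \<Rightarrow>\<^sub>0 'a"

definition differential_field :: "('a::field \<Rightarrow> 'a) \<Rightarrow> bool" where
  "differential_field \<delta> \<longleftrightarrow>
     (\<forall>a b. \<delta> (a + b) = \<delta> a + \<delta> b) \<and> (\<forall>a b. \<delta> (a * b) = a * \<delta> b + \<delta> a * b)"

definition dp_const :: "'a::field \<Rightarrow> ('v, 'a) dpoly" where
  "dp_const c = Poly_Mapping.single 0 c"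

definition dp_var :: "'v \<Rightarrow> nat \<Rightarrow> ('v, 'a::field) dpoly" where
  "dp_var v k = Poly_Mapping.single (Poly_Mapping.single (v, k) 1) 1"

definition dmono_deriv :: "(('v \<times> nat) \<Rightarrow>\<^sub>0 nat) \<Rightarrow> ('v, 'a::field) dpoly" where
  "dmono_deriv m = (\<Sum>w\<in>Poly_Mapping.keys m. of_nat (Poly_Mapping.lookup m w) *
      Poly_Mapping.single (m - Poly_Mapping.single w 1 + Poly_Mapping.single (fst w, Suc (snd w)) 1) 1)"

definition dp_deriv :: "('a::field \<Rightarrow> 'a) \<Rightarrow> ('v, 'a) dpoly \<Rightarrow> ('v, 'a) dpoly" where
  "dp_deriv \<delta> p = (\<Sum>m\<in>Poly_Mapping.keys p. Poly_Mapping.single m (\<delta> (Poly_Mapping.lookup p m))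
                                 + dp_const (Poly_Mapping.lookup p m) * dmono_deriv m)"

definition dp_subst :: "('v \<times> nat \<Rightarrow> ('w, 'a::field) dpoly) \<Rightarrow> ('v, 'a) dpoly \<Rightarrow> ('w, 'a) dpoly" where
  "dp_subst \<sigma> p = (\<Sum>m\<in>Poly_Mapping.keys p. dp_const (Poly_Mapping.lookup p m) * (\<Prod>w\<in>Poly_Mapping.keys m. \<sigma> w ^ Poly_Mapping.lookup m w))"

definition is_ideal :: "('a::comm_ring_1) set \<Rightarrow> bool" where
  "is_ideal I \<longleftrightarrow> 0 \<in> I \<and> (\<forall>a\<in>I. \<forall>b\<in>I. a + b \<in> I) \<and> (\<forall>r. \<forall>a\<in>I. r * a \<in> I)"

definition is_diff_ideal :: "('a::field \<Rightarrow> 'a) \<Rightarrow> ('v, 'a) dpoly set \<Rightarrow> bool" where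
  "is_diff_ideal \<delta> I \<longleftrightarrow> is_ideal I \<and> (\<forall>a\<in>I. dp_deriv \<delta> a \<in> I)"

definition is_prime_ideal :: "('a::comm_ring_1) set \<Rightarrow> bool" where
  "is_prime_ideal I \<longleftrightarrow> is_ideal I \<and> I \<noteq> UNIV \<and> (\<forall>a b. a * b \<in> I \<longrightarrow> a \<in> I \<or> b \<in> I)"

definition diff_ideal_gen :: "('a::field \<Rightarrow> 'a) \<Rightarrow> ('v, 'a) dpoly set \<Rightarrow> ('v, 'a) dpoly set" where
  "diff_ideal_gen \<delta> S = \<Inter>{J. is_diff_ideal \<delta> J \<and> S \<subseteq> J}"

definition colon_vars :: "('v, 'a::field) dpoly set \<Rightarrow> ('v, 'a) dpoly set" where
  "colon_vars I = {f. \<forall>j. dp_var j 0 * f \<in> I}"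

text \<open>Embedding F{Y} into F{t,Y}; the new indeterminate t is indexed by None, y_j by Some j.\<close>
definition embed_tY :: "('v, 'a::field) dpoly \<Rightarrow> ('v option, 'a) dpoly" where
  "embed_tY = dp_subst (\<lambda>(j, k). dp_var (Some j) k)"

text \<open>P(tY): the differential substitution y_j \<mapsto> t y_j, so y_j^(k) \<mapsto> (t y_j)^(k).\<close>
definition scale_tY :: "('a::field \<Rightarrow> 'a) \<Rightarrow> ('v, 'a) dpoly \<Rightarrow> ('v option, 'a) dpoly" where
  "scale_tY \<delta> = dp_subst (\<lambda>(j, k). (dp_deriv \<delta> ^^ k) (dp_var None 0 * dp_var (Some j) 0))"

definition diff_homogeneous :: "('a::field \<Rightarrow> 'a) \<Rightarrow> ('v, 'a) dpoly set \<Rightarrow> bool" where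
  "diff_homogeneous \<delta> I \<longleftrightarrow> colon_vars I = I \<and>
     (\<forall>P\<in>I. scale_tY \<delta> P \<in> diff_ideal_gen \<delta> (embed_tY ` I))"

definition dp_sub :: "'v set \<Rightarrow> ('v, 'a::field) dpoly set" where
  "dp_sub U = {p. \<forall>m\<in>Poly_Mapping.keys p. \<forall>w\<in>Poly_Mapping.keys m. fst w \<in> U}"

definition diff_indep_mod :: "('v, 'a::field) dpoly set \<Rightarrow> 'v set \<Rightarrow> bool" where
  "diff_indep_mod I U \<longleftrightarrow> I \<inter> dp_sub U = {0}"

definition parametric_set :: "('v, 'a::field) dpoly set \<Rightarrow> 'v set \<Rightarrow> bool" where
  "parametric_set I U \<longleftrightarrow> diff_indep_mod I U \<and> (\<forall>V. U \<subset> V \<longrightarrow> \<not> diff_indep_mod I V)"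

end

theory Submission
  imports Defs
begin


definition LE :: "('k \<Rightarrow> 'b::zero \<Rightarrow> 'c::comm_monoid_add) \<Rightarrow> ('k \<Rightarrow>\<^sub>0 'b) \<Rightarrow> 'c" where
  "LE F p = (\<Sum>k\<in>Poly_Mapping.keys p. F k (Poly_Mapping.lookup p k))"

lemma LE_superset:
  assumes "\<And>k. F k 0 = 0" "finite S" "Poly_Mapping.keys p \<subseteq> S"
  shows "LE F p = (\<Sum>k\<in>S. F k (Poly_Mapping.lookup p k))"
  unfolding LE_def using assms
  by (intro sum.mono_neutral_left) (auto simp: in_keys_iff)

lemma LE_add:
  assumes "\<And>k. F k 0 = 0" "\<And>k a b. F k (a + b) = F k a + F k b"
  shows "LE F (p + q) = LE F p + LE F q"
  unfolding LE_def lookup_add[symmetric]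
  by (rule setsum_keys_plus_distrib) (use assms in auto)

lemma LE_single[simp]:
  assumes "\<And>k. F k 0 = 0"
  shows "LE F (Poly_Mapping.single k v) = F k v"
  using assms by (simp add: LE_def)

lemma LE_zero[simp]: "LE F 0 = 0"
  by (simp add: LE_def)

lemma hom_sum:
  assumes "\<And>x y. h (x + y) = h x + h y" "h 0 = 0"
  shows "h (sum g S) = (\<Sum>s\<in>S. h (g s))"
  by (induction S rule: infinite_finite_induct) (auto simp: assms)

lemma LE_sum:
  assumes "\<And>k. F k 0 = 0" "\<And>k a b. F k (a + b) = F k a + F k b"
  shows "LE F (sum g S) = (\<Sum>s\<in>S. LE F (g s))"
  by (rule hom_sum) (auto simp: LE_add assms)

lemma pm_expand: "p = (\<Sum>k\<in>Poly_Mapping.keys p. Poly_Mapping.single k (Poly_Mapping.lookup p k))"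
  by (rule poly_mapping_eqI) (simp add: lookup_sum lookup_single when_def in_keys_iff)

lemma hom_eqI:
  fixes p :: "'k \<Rightarrow>\<^sub>0 'b::comm_monoid_add" and hA hB :: "_ \<Rightarrow> 'c::comm_monoid_add"
  assumes "\<And>x y. hA (x + y) = hA x + hA y" "hA 0 = 0"
      "\<And>x y. hB (x + y) = hB x + hB y" "hB 0 = 0"
      "\<And>k v. hA (Poly_Mapping.single k v) = hB (Poly_Mapping.single k v)"
  shows "hA p = hB p"
proof -
  have "hA p = hA (\<Sum>k\<in>Poly_Mapping.keys p. Poly_Mapping.single k (Poly_Mapping.lookup p k))"
    by (subst pm_expand) rule
  also have "\<dots> = hB (\<Sum>k\<in>Poly_Mapping.keys p. Poly_Mapping.single k (Poly_Mapping.lookup p k))"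
    by (simp add: hom_sum[of hA] hom_sum[of hB] assms)
  finally show ?thesis by (metis pm_expand)
qed



lemma const_add: "dp_const (a + b) = dp_const a + dp_const b"
  by (simp add: dp_const_def single_add)
lemma const_mult: "dp_const (a * b) = dp_const a * dp_const b"
  by (simp add: dp_const_def mult_single)
lemma const_0[simp]: "dp_const 0 = 0" by (simp add: dp_const_def)
lemma const_1[simp]: "dp_const 1 = 1" by (simp add: dp_const_def)
lemma single_split: "Poly_Mapping.single m c = dp_const c * Poly_Mapping.single m 1"
  by (simp add: dp_const_def mult_single)
lemma lookup_pmap: "Poly_Mapping.lookup (Poly_Mapping.map g f) k = (if Poly_Mapping.lookup f k = 0 then 0 else g (Poly_Mapping.lookup f k))"
  by (simp add: Poly_Mapping.map.rep_eq when_def)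
lemma lookup_const_mult: "Poly_Mapping.lookup (dp_const c * f) m = c * Poly_Mapping.lookup f m"
  by (simp add: dp_const_def mult_map_scale_conv_mult[symmetric] lookup_pmap)
lemma keys_const_mult: "Poly_Mapping.keys (dp_const c * f) \<subseteq> Poly_Mapping.keys f"
  by (auto simp: in_keys_iff lookup_const_mult)
lemma const_of_nat: "(of_nat n :: ('v,'a::field) dpoly) = dp_const (of_nat n)"
  by (simp add: dp_const_def)

abbreviation "X m \<equiv> Poly_Mapping.single m 1"

definition sh :: "'v \<times> nat \<Rightarrow> 'v \<times> nat" where "sh w = (fst w, Suc (snd w))"

lemma dmono_superset:
  assumes "finite S" "Poly_Mapping.keys m \<subseteq> S"
  shows "(dmono_deriv m :: ('v,'a::field) dpoly) = (\<Sum>w\<in>S. of_nat (Poly_Mapping.lookup m w) *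
      X (m - Poly_Mapping.single w 1 + Poly_Mapping.single (sh w) 1))"
  unfolding dmono_deriv_def sh_def using assms
  by (intro sum.mono_neutral_left) (auto simp: in_keys_iff)

lemma dmono_zero[simp]: "dmono_deriv 0 = 0"
  by (simp add: dmono_deriv_def)

lemma dmono_add: "(dmono_deriv (a + b) :: ('v,'a::field) dpoly) = X a * dmono_deriv b + dmono_deriv a * X b"
proof -
  let ?S = "Poly_Mapping.keys a \<union> Poly_Mapping.keys b"
  have fin: "finite ?S" by simp
  let ?T = "\<lambda>m w. X (m - Poly_Mapping.single w 1 + Poly_Mapping.single (sh w) 1) :: ('v,'a) dpoly"
  have "dmono_deriv (a + b) = (\<Sum>w\<in>?S. of_nat (Poly_Mapping.lookup (a+b) w) * ?T (a+b) w)"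
    by (rule dmono_superset) (use keys_add[of a b] in auto)
  also have "\<dots> = (\<Sum>w\<in>?S. X a * (of_nat (Poly_Mapping.lookup b w) * ?T b w) +
                       of_nat (Poly_Mapping.lookup a w) * ?T a w * X b)"
  proof (rule sum.cong[OF refl])
    fix w
    have e1: "X a * (of_nat (Poly_Mapping.lookup b w) * ?T b w) = of_nat (Poly_Mapping.lookup b w) * ?T (a+b) w"
    proof (cases "Poly_Mapping.lookup b w = 0")
      case False
      have "a + (b - Poly_Mapping.single w 1 + Poly_Mapping.single (sh w) 1) =
            a + b - Poly_Mapping.single w 1 + Poly_Mapping.single (sh w) 1"
        using False by (intro poly_mapping_eqI) (auto simp: lookup_add lookup_minus lookup_single when_def)
      then show ?thesis by (simp only: mult.left_commute[of "X a"] mult_single mult_1)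
    qed simp
    have e2: "of_nat (Poly_Mapping.lookup a w) * ?T a w * X b = of_nat (Poly_Mapping.lookup a w) * ?T (a+b) w"
    proof (cases "Poly_Mapping.lookup a w = 0")
      case False
      have "(a - Poly_Mapping.single w 1 + Poly_Mapping.single (sh w) 1) + b =
            a + b - Poly_Mapping.single w 1 + Poly_Mapping.single (sh w) 1"
        using False by (intro poly_mapping_eqI) (auto simp: lookup_add lookup_minus lookup_single when_def)
      then show ?thesis by (simp only: mult.assoc mult_single mult_1)
    qed simp
    show "of_nat (Poly_Mapping.lookup (a+b) w) * ?T (a+b) w = X a * (of_nat (Poly_Mapping.lookup b w) * ?T b w) +
                       of_nat (Poly_Mapping.lookup a w) * ?T a w * X b"
      unfolding e1 e2 lookup_add of_nat_add distrib_right by (rule add.commute)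
  qed
  also have "\<dots> = X a * (\<Sum>w\<in>?S. of_nat (Poly_Mapping.lookup b w) * ?T b w) +
                  (\<Sum>w\<in>?S. of_nat (Poly_Mapping.lookup a w) * ?T a w) * X b"
    by (simp only: sum.distrib sum_distrib_left sum_distrib_right)
  also have "\<dots> = X a * dmono_deriv b + dmono_deriv a * X b"
    by (subst (1 2) dmono_superset[OF fin]) auto
  finally show ?thesis .
qed

context
  fixes \<delta> :: "'a::field \<Rightarrow> 'a"
  assumes df: "differential_field \<delta>"
begin

lemma d_add: "\<delta> (a + b) = \<delta> a + \<delta> b" using df by (simp add: differential_field_def)
lemma d_mult: "\<delta> (a * b) = a * \<delta> b + \<delta> a * b" using df by (simp add: differential_field_def)
lemma d_0[simp]: "\<delta> 0 = 0"
proof -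
  have "\<delta> 0 + 0 = \<delta> 0 + \<delta> 0" using d_add[of 0 0] by simp
  then show ?thesis by (metis add_left_imp_eq)
qed
lemma d_1[simp]: "\<delta> 1 = 0"
proof -
  have "\<delta> 1 + 0 = \<delta> 1 + \<delta> 1" using d_mult[of 1 1] by simp
  then show ?thesis by (metis add_left_imp_eq)
qed
lemma d_of_nat[simp]: "\<delta> (of_nat n) = 0" by (induction n) (simp_all add: d_add)

lemma D_LE: "dp_deriv \<delta> p = LE (\<lambda>m c. Poly_Mapping.single m (\<delta> c) + dp_const c * dmono_deriv m) p"
  by (simp add: dp_deriv_def LE_def)

lemma D_add: "dp_deriv \<delta> (p + q) = dp_deriv \<delta> p + dp_deriv \<delta> q"
  unfolding D_LE by (rule LE_add) (auto simp: d_add single_add const_add algebra_simps)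

lemma D_zero[simp]: "dp_deriv \<delta> 0 = 0"
  unfolding D_LE by simp

lemma D_single: "dp_deriv \<delta> (Poly_Mapping.single m c) = Poly_Mapping.single m (\<delta> c) + dp_const c * dmono_deriv m"
  unfolding D_LE by (subst LE_single) auto

lemma D_sum: "dp_deriv \<delta> (sum g S) = (\<Sum>s\<in>S. dp_deriv \<delta> (g s))"
  by (rule hom_sum) (auto simp: D_add)

lemma D_const: "dp_deriv \<delta> (dp_const c) = dp_const (\<delta> c)"
  unfolding dp_const_def D_single by (simp add: dp_const_def)


lemma D_leibniz: "dp_deriv \<delta> (p * q) = p * dp_deriv \<delta> q + dp_deriv \<delta> p * q"
proof -
  have ss: "dp_deriv \<delta> (Poly_Mapping.single m c * Poly_Mapping.single m' c') =
      Poly_Mapping.single m c * dp_deriv \<delta> (Poly_Mapping.single m' c') + dp_deriv \<delta> (Poly_Mapping.single m c) * Poly_Mapping.single m' c'"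
    for m m' c c'
  proof -
    have "dp_deriv \<delta> (Poly_Mapping.single m c * Poly_Mapping.single m' c') =
       dp_const (c * \<delta> c' + \<delta> c * c') * (X m * X m') + dp_const (c * c') * (X m * dmono_deriv m' + dmono_deriv m * X m')"
      by (simp only: mult_single D_single dmono_add d_mult) (subst single_split, simp add: mult_single)
    also have "\<dots> = (dp_const c * X m) * (dp_const (\<delta> c') * X m' + dp_const c' * dmono_deriv m') +
       (dp_const (\<delta> c) * X m + dp_const c * dmono_deriv m) * (dp_const c' * X m')"
      by (simp only: const_add const_mult algebra_simps)
    also have "\<dots> = Poly_Mapping.single m c * dp_deriv \<delta> (Poly_Mapping.single m' c') + dp_deriv \<delta> (Poly_Mapping.single m c) * Poly_Mapping.single m' c'"
      by (simp only: D_single single_split[symmetric] mult.assoc[symmetric] const_mult[symmetric] mult_single) 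
    finally show ?thesis .
  qed
  have sp: "dp_deriv \<delta> (Poly_Mapping.single m c * q) =
      Poly_Mapping.single m c * dp_deriv \<delta> q + dp_deriv \<delta> (Poly_Mapping.single m c) * q" for m c
    by (rule hom_eqI[where hA="\<lambda>q. dp_deriv \<delta> (Poly_Mapping.single m c * q)"])
       (auto simp: D_add algebra_simps ss)
  show ?thesis
    by (rule hom_eqI[where hA="\<lambda>p. dp_deriv \<delta> (p * q)"]) (auto simp: D_add ring_distribs sp add_ac)
qed

end


definition mu :: "('v \<times> nat \<Rightarrow> ('w, 'a::field) dpoly) \<Rightarrow> (('v \<times> nat) \<Rightarrow>\<^sub>0 nat) \<Rightarrow> ('w, 'a) dpoly" where
  "mu \<sigma> m = (\<Prod>w\<in>Poly_Mapping.keys m. \<sigma> w ^ Poly_Mapping.lookup m w)"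

lemma mu_superset:
  assumes "finite S" "Poly_Mapping.keys m \<subseteq> S"
  shows "mu \<sigma> m = (\<Prod>w\<in>S. \<sigma> w ^ Poly_Mapping.lookup m w)"
  unfolding mu_def using assms by (intro prod.mono_neutral_left) (auto simp: in_keys_iff)

lemma mu_add: "mu \<sigma> (a + b) = mu \<sigma> a * mu \<sigma> b"
proof -
  let ?S = "Poly_Mapping.keys a \<union> Poly_Mapping.keys b"
  have "mu \<sigma> (a + b) = (\<Prod>w\<in>?S. \<sigma> w ^ Poly_Mapping.lookup (a+b) w)"
    by (rule mu_superset) (use keys_add[of a b] in auto)
  also have "\<dots> = (\<Prod>w\<in>?S. \<sigma> w ^ Poly_Mapping.lookup a w) * (\<Prod>w\<in>?S. \<sigma> w ^ Poly_Mapping.lookup b w)"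
    by (simp add: lookup_add power_add prod.distrib)
  also have "\<dots> = mu \<sigma> a * mu \<sigma> b" by (subst (1 2) mu_superset) auto
  finally show ?thesis .
qed

lemma mu_zero[simp]: "mu \<sigma> 0 = 1" by (simp add: mu_def)
lemma mu_var[simp]: "mu \<sigma> (Poly_Mapping.single w 1) = \<sigma> w" by (simp add: mu_def)
lemma mu_var'[simp]: "mu \<sigma> (Poly_Mapping.single w (Suc 0)) = \<sigma> w" by (simp add: mu_def)

lemma subst_LE: "dp_subst \<sigma> p = LE (\<lambda>m c. dp_const c * mu \<sigma> m) p"
  by (simp add: dp_subst_def LE_def mu_def)

lemma subst_add: "dp_subst \<sigma> (p + q) = dp_subst \<sigma> p + dp_subst \<sigma> q"
  unfolding subst_LE by (rule LE_add) (auto simp: const_add algebra_simps)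

lemma subst_zero[simp]: "dp_subst \<sigma> 0 = 0" unfolding subst_LE by simp

lemma subst_single: "dp_subst \<sigma> (Poly_Mapping.single m c) = dp_const c * mu \<sigma> m"
  unfolding subst_LE by (subst LE_single) auto

lemma subst_sum: "dp_subst \<sigma> (sum g S) = (\<Sum>s\<in>S. dp_subst \<sigma> (g s))"
  by (rule hom_sum) (auto simp: subst_add)

lemma subst_mult: "dp_subst \<sigma> (p * q) = dp_subst \<sigma> p * dp_subst \<sigma> q"
proof -
  have sp: "dp_subst \<sigma> (Poly_Mapping.single m c * q) = dp_subst \<sigma> (Poly_Mapping.single m c) * dp_subst \<sigma> q" for m c
    by (rule hom_eqI[where hA="\<lambda>q. dp_subst \<sigma> (Poly_Mapping.single m c * q)"])
       (auto simp: subst_add ring_distribs mult_single subst_single mu_add const_mult algebra_simps)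
  show ?thesis
    by (rule hom_eqI[where hA="\<lambda>p. dp_subst \<sigma> (p * q)"]) (auto simp: subst_add ring_distribs sp)
qed

lemma subst_const[simp]: "dp_subst \<sigma> (dp_const c) = dp_const c"
  unfolding dp_const_def subst_single by (simp add: dp_const_def)

lemma subst_one[simp]: "dp_subst \<sigma> 1 = 1"
  using subst_const[of \<sigma> 1] by simp

lemma subst_power: "dp_subst \<sigma> (p ^ n) = dp_subst \<sigma> p ^ n"
  by (induction n) (simp_all add: subst_mult)

lemma subst_X: "dp_subst \<sigma> (X m) = mu \<sigma> m"
  by (simp add: subst_single)

lemma subst_var[simp]: "dp_subst \<sigma> (dp_var v k) = \<sigma> (v, k)"
  by (simp add: dp_var_def subst_X)

definition mdeg :: "('k \<Rightarrow>\<^sub>0 nat) \<Rightarrow> nat" where "mdeg m = LE (\<lambda>k n. n) m"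

lemma mdeg_add: "mdeg (a + b) = mdeg a + mdeg b"
  unfolding mdeg_def by (rule LE_add) auto

lemma mdeg_single[simp]: "mdeg (Poly_Mapping.single k n) = n"
  unfolding mdeg_def by simp

lemma mdeg_0_iff: "mdeg m = 0 \<longleftrightarrow> m = 0"
  unfolding mdeg_def LE_def by (auto simp: in_keys_iff intro: poly_mapping_eqI)

lemma monomial_induct:
  fixes m :: "'k \<Rightarrow>\<^sub>0 nat"
  assumes "P 0" "\<And>m w. P m \<Longrightarrow> P (m + Poly_Mapping.single w 1)"
  shows "P m"
proof (induction "mdeg m" arbitrary: m rule: less_induct)
  case less
  show ?case
  proof (cases "m = 0")
    case True then show ?thesis using assms by simp
  next
    case False
    then obtain w where w: "w \<in> Poly_Mapping.keys m"
      by (metis keys_eq_empty ex_in_conv)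
    let ?m' = "m - Poly_Mapping.single w 1"
    have m: "m = ?m' + Poly_Mapping.single w 1"
      using w by (intro poly_mapping_eqI) (auto simp: lookup_add lookup_minus lookup_single when_def in_keys_iff)
    have "mdeg m = mdeg ?m' + 1" by (subst m) (simp add: mdeg_add)
    then have "P ?m'" by (intro less) simp
    then show ?thesis by (subst m) (rule assms(2))
  qed
qed

lemma dmono_var: "(dmono_deriv (Poly_Mapping.single w 1) :: ('v, 'a::field) dpoly) = X (Poly_Mapping.single (sh w) 1)"
  by (simp add: dmono_deriv_def sh_def)
lemma dmono_var'[simp]: "(dmono_deriv (Poly_Mapping.single w (Suc 0)) :: ('v, 'a::field) dpoly) = X (Poly_Mapping.single (sh w) 1)"
  using dmono_var by simp

context
  fixes \<delta> :: "'a::field \<Rightarrow> 'a"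
  assumes df: "differential_field \<delta>"
begin

lemma D_one[simp]: "dp_deriv \<delta> 1 = 0"
  using D_const[OF df, of 1] d_1[OF df] by simp

lemma D_var: "dp_deriv \<delta> (dp_var v k) = dp_var v (Suc k)"
  by (simp add: dp_var_def D_single[OF df] d_1[OF df] dmono_var sh_def)

lemma D_power: "dp_deriv \<delta> (p ^ Suc n) = of_nat (Suc n) * p ^ n * dp_deriv \<delta> p"
  by (induction n) (simp_all add: D_leibniz[OF df] algebra_simps)

lemma subst_D:
  assumes sig: "\<And>w. dp_deriv \<delta> (\<sigma> w) = \<sigma> (sh w)"
  shows "dp_deriv \<delta> (dp_subst \<sigma> p) = dp_subst \<sigma> (dp_deriv \<delta> p)"
proof -
  have mono: "dp_deriv \<delta> (mu \<sigma> m) = dp_subst \<sigma> (dmono_deriv m)" for m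
  proof (induction m rule: monomial_induct)
    case 1 then show ?case by (simp add: mu_def)
  next
    case (2 m w)
    show ?case
      by (simp add: mu_add D_leibniz[OF df] dmono_add subst_add subst_mult subst_X 2 dmono_var sig)
  qed
  have ss: "dp_deriv \<delta> (dp_subst \<sigma> (Poly_Mapping.single m c)) = dp_subst \<sigma> (dp_deriv \<delta> (Poly_Mapping.single m c))" for m c
    by (simp add: subst_single D_leibniz[OF df] D_const[OF df] D_single[OF df] subst_add subst_mult mono)
  show ?thesis
    by (rule hom_eqI[where hA="\<lambda>p. dp_deriv \<delta> (dp_subst \<sigma> p)"]) (auto simp: subst_add D_add[OF df] D_zero[OF df] ss)
qed

end


definition rn :: "'n \<times> nat \<Rightarrow> 'n option \<times> nat" where "rn w = (Some (fst w), snd w)"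

definition ren :: "(('n \<times> nat) \<Rightarrow>\<^sub>0 nat) \<Rightarrow> (('n option \<times> nat) \<Rightarrow>\<^sub>0 nat)" where
  "ren m = LE (\<lambda>w n. Poly_Mapping.single (rn w) n) m"

lemma ren_add: "ren (a + b) = ren a + ren b"
  unfolding ren_def by (rule LE_add) (auto simp: single_add)
lemma ren_zero[simp]: "ren 0 = 0" by (simp add: ren_def)
lemma ren_single[simp]: "ren (Poly_Mapping.single w n) = Poly_Mapping.single (rn w) n"
  by (simp add: ren_def)

definition sige :: "'n \<times> nat \<Rightarrow> ('n option, 'a::field) dpoly" where
  "sige = (\<lambda>(j, k). dp_var (Some j) k)"

lemma embed_eq: "embed_tY = dp_subst sige"
  by (simp add: embed_tY_def sige_def)

lemma mu_sige: "mu sige m = X (ren m)"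
proof (induction m rule: monomial_induct)
  case 1 then show ?case by simp
next
  case (2 m w)
  then show ?case
    by (simp add: mu_add ren_add mult_single sige_def dp_var_def rn_def split: prod.splits)
qed

lemma embed_single: "embed_tY (Poly_Mapping.single m c) = Poly_Mapping.single (ren m) c"
  by (simp add: embed_eq subst_single mu_sige single_split[symmetric])

lemma embed_add: "embed_tY (p + q) = embed_tY p + embed_tY q"
  by (simp add: embed_eq subst_add)
lemma embed_zero[simp]: "embed_tY 0 = 0" by (simp add: embed_eq)

lemma embed_D:
  assumes df: "differential_field \<delta>"
  shows "dp_deriv \<delta> (embed_tY g) = embed_tY (dp_deriv \<delta> g)"
  unfolding embed_eq
  by (rule subst_D[OF df]) (simp add: sige_def sh_def D_var[OF df] split: prod.splits)

definition tpart :: "(('n option \<times> nat) \<Rightarrow>\<^sub>0 nat) \<Rightarrow> (('n option \<times> nat) \<Rightarrow>\<^sub>0 nat)" where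
  "tpart m = LE (\<lambda>w n. if fst w = None then Poly_Mapping.single w n else 0) m"

definition ypart :: "(('n option \<times> nat) \<Rightarrow>\<^sub>0 nat) \<Rightarrow> (('n \<times> nat) \<Rightarrow>\<^sub>0 nat)" where
  "ypart m = LE (\<lambda>w n. case fst w of None \<Rightarrow> 0 | Some j \<Rightarrow> Poly_Mapping.single (j, snd w) n) m"

lemma tpart_add: "tpart (a + b) = tpart a + tpart b"
  unfolding tpart_def by (rule LE_add) (auto simp: single_add)
lemma ypart_add: "ypart (a + b) = ypart a + ypart b"
  unfolding ypart_def by (rule LE_add) (auto simp: single_add split: option.splits)
lemma tpart_zero[simp]: "tpart 0 = 0" by (simp add: tpart_def)
lemma ypart_zero[simp]: "ypart 0 = 0" by (simp add: ypart_def)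
lemma tpart_single: "tpart (Poly_Mapping.single w n) = (if fst w = None then Poly_Mapping.single w n else 0)"
  by (simp add: tpart_def)
lemma ypart_single: "ypart (Poly_Mapping.single w n) = (case fst w of None \<Rightarrow> 0 | Some j \<Rightarrow> Poly_Mapping.single (j, snd w) n)"
  by (simp add: ypart_def split: option.splits)

lemma tpart_ren[simp]: "tpart (ren m) = 0"
  by (rule hom_eqI[where hA="\<lambda>m. tpart (ren m)"]) (auto simp: tpart_add ren_add tpart_single rn_def)
lemma ypart_ren[simp]: "ypart (ren m) = m"
  by (rule hom_eqI[where hA="\<lambda>m. ypart (ren m)"]) (auto simp: ypart_add ren_add ypart_single rn_def)

definition Lam :: "(('n option \<times> nat) \<Rightarrow>\<^sub>0 nat) \<Rightarrow> ('n option, 'a::field) dpoly \<Rightarrow> ('n, 'a) dpoly" where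
  "Lam \<alpha> f = LE (\<lambda>m c. if tpart m = \<alpha> then Poly_Mapping.single (ypart m) c else 0) f"

lemma Lam_add: "Lam \<alpha> (p + q) = Lam \<alpha> p + Lam \<alpha> q"
  unfolding Lam_def by (rule LE_add) (auto simp: single_add)
lemma Lam_zero[simp]: "Lam \<alpha> 0 = 0" by (simp add: Lam_def)
lemma Lam_single: "Lam \<alpha> (Poly_Mapping.single m c) = (if tpart m = \<alpha> then Poly_Mapping.single (ypart m) c else 0)"
  by (simp add: Lam_def)
lemma Lam_sum: "Lam \<alpha> (sum g S) = (\<Sum>s\<in>S. Lam \<alpha> (g s))"
  by (rule hom_sum) (auto simp: Lam_add)

lemma Lam_mult_embed: "Lam \<alpha> (r * embed_tY g) = Lam \<alpha> r * g"
proof -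
  have ss: "Lam \<alpha> (Poly_Mapping.single m c * embed_tY g) = Lam \<alpha> (Poly_Mapping.single m c) * g" for m c
    by (rule hom_eqI[where hA="\<lambda>g. Lam \<alpha> (Poly_Mapping.single m c * embed_tY g)"])
       (auto simp: Lam_add embed_add ring_distribs embed_single mult_single Lam_single tpart_add ypart_add)
  show ?thesis
    by (rule hom_eqI[where hA="\<lambda>r. Lam \<alpha> (r * embed_tY g)"]) (auto simp: Lam_add ring_distribs ss)
qed

inductive_set Jgen :: "('n, 'a::field) dpoly set \<Rightarrow> ('n option, 'a) dpoly set" for I where
  J0: "0 \<in> Jgen I"
| Jstep: "g \<in> I \<Longrightarrow> f \<in> Jgen I \<Longrightarrow> r * embed_tY g + f \<in> Jgen I"

lemma Jgen_add: "f1 \<in> Jgen I \<Longrightarrow> f2 \<in> Jgen I \<Longrightarrow> f1 + f2 \<in> Jgen I"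
  by (induction f1 rule: Jgen.induct) (auto simp: add.assoc intro: Jgen.intros)

lemma Jgen_mult: "f \<in> Jgen I \<Longrightarrow> s * f \<in> Jgen I"
proof (induction f rule: Jgen.induct)
  case J0 then show ?case by (simp add: Jgen.J0)
next
  case (Jstep g f r)
  have "s * (r * embed_tY g + f) = (s * r) * embed_tY g + s * f" by (simp add: algebra_simps)
  then show ?case using Jstep by (simp add: Jgen.Jstep)
qed

lemma Jgen_embed: "g \<in> I \<Longrightarrow> embed_tY g \<in> Jgen I"
  using Jgen.Jstep[OF _ Jgen.J0, of g I 1] by simp

lemma Jgen_D:
  assumes df: "differential_field \<delta>" and ID: "\<forall>a\<in>I. dp_deriv \<delta> a \<in> I"
  shows "f \<in> Jgen I \<Longrightarrow> dp_deriv \<delta> f \<in> Jgen I"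
proof (induction f rule: Jgen.induct)
  case J0 then show ?case by (simp add: D_zero[OF df] Jgen.J0)
next
  case (Jstep g f r)
  have "dp_deriv \<delta> (r * embed_tY g + f) = r * embed_tY (dp_deriv \<delta> g) + (dp_deriv \<delta> r * embed_tY g + dp_deriv \<delta> f)"
    by (simp add: D_add[OF df] D_leibniz[OF df] embed_D[OF df] algebra_simps)
  then show ?case using Jstep ID by (simp add: Jgen.Jstep)
qed

lemma diff_ideal_Jgen:
  assumes df: "differential_field \<delta>" and "is_diff_ideal \<delta> I"
  shows "diff_ideal_gen \<delta> (embed_tY ` I) \<subseteq> Jgen I"
proof -
  have "is_diff_ideal \<delta> (Jgen I)"
    using assms unfolding is_diff_ideal_def is_ideal_def
    by (auto intro: Jgen.J0 Jgen_add Jgen_mult Jgen_D[OF df])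
  moreover have "embed_tY ` I \<subseteq> Jgen I" by (auto intro: Jgen_embed)
  ultimately show ?thesis unfolding diff_ideal_gen_def by blast
qed

lemma Lam_Jgen:
  assumes "is_ideal I"
  shows "f \<in> Jgen I \<Longrightarrow> Lam \<alpha> f \<in> I"
proof (induction f rule: Jgen.induct)
  case J0 then show ?case using assms by (simp add: is_ideal_def)
next
  case (Jstep g f r)
  have "Lam \<alpha> r * g \<in> I" using Jstep assms unfolding is_ideal_def by blast
  then show ?case using Jstep assms unfolding is_ideal_def by (simp add: Lam_add Lam_mult_embed)
qed



lemma binom_step:
  fixes a :: "nat \<Rightarrow> nat \<Rightarrow> 'r::comm_ring_1"
  shows "(\<Sum>l\<le>k. of_nat (k choose l) * (a (Suc l) (k - l) + a l (Suc k - l))) =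
         (\<Sum>l\<le>Suc k. of_nat (Suc k choose l) * a l (Suc k - l))"
proof -
  have A: "(\<Sum>l\<le>Suc k. of_nat (Suc k choose l) * a l (Suc k - l)) =
        a 0 (Suc k) + (\<Sum>l\<le>k. of_nat (k choose l) * a (Suc l) (k - l)) +
        (\<Sum>l\<le>k. of_nat (k choose Suc l) * a (Suc l) (k - l))"
    by (subst sum.atMost_Suc_shift) (simp add: sum.distrib algebra_simps)
  have B: "(\<Sum>l\<le>k. of_nat (k choose l) * a l (Suc k - l)) =
        (\<Sum>l\<le>Suc k. of_nat (k choose l) * a l (Suc k - l))"
    by (simp add: binomial_eq_0)
  also have "\<dots> = a 0 (Suc k) + (\<Sum>l\<le>k. of_nat (k choose Suc l) * a (Suc l) (k - l))"
    by (subst sum.atMost_Suc_shift) simp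
  finally show ?thesis using A by (simp add: sum.distrib algebra_simps)
qed

definition tvar :: "nat \<Rightarrow> ('n option, 'a::field) dpoly" where "tvar l = dp_var None l"
definition yvar :: "'n \<Rightarrow> nat \<Rightarrow> ('n option, 'a::field) dpoly" where "yvar j r = dp_var (Some j) r"

lemma D_of_nat:
  assumes df: "differential_field \<delta>"
  shows "dp_deriv \<delta> (of_nat n :: ('v,'a::field) dpoly) = 0"
  by (simp add: const_of_nat D_const[OF df] d_of_nat[OF df])

lemma D_of_nat_mult:
  assumes df: "differential_field \<delta>"
  shows "dp_deriv \<delta> (of_nat n * f) = of_nat n * dp_deriv \<delta> f"
  by (simp add: D_leibniz[OF df] const_of_nat D_const[OF df] d_of_nat[OF df])

lemma iter_D_formula:
  assumes df: "differential_field \<delta>"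
  shows "(dp_deriv \<delta> ^^ k) (tvar 0 * yvar j 0 :: ('n option, 'a::field) dpoly) =
    (\<Sum>l\<le>k. of_nat (k choose l) * (tvar l * yvar j (k - l)))"
proof (induction k)
  case 0 then show ?case by simp
next
  case (Suc k)
  have "(dp_deriv \<delta> ^^ Suc k) (tvar 0 * yvar j 0 :: ('n option, 'a) dpoly) =
     (\<Sum>l\<le>k. of_nat (k choose l) * (tvar (Suc l) * yvar j (k - l) + tvar l * yvar j (Suc k - l)))"
    by (simp only: funpow.simps comp_apply Suc) (simp add: D_sum[OF df] D_of_nat[OF df] D_of_nat_mult[OF df] D_leibniz[OF df] tvar_def yvar_def D_var[OF df]
          Suc_diff_le algebra_simps)
  also have "\<dots> = (\<Sum>l\<le>Suc k. of_nat (Suc k choose l) * (tvar l * yvar j (Suc k - l)))"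
    by (rule binom_step[where a="\<lambda>l r. tvar l * yvar j r"])
  finally show ?case .
qed



definition wt :: "(('k \<times> nat) \<Rightarrow>\<^sub>0 nat) \<Rightarrow> nat" where "wt m = LE (\<lambda>w n. snd w * n) m"

lemma wt_add: "wt (a + b) = wt a + wt b"
  unfolding wt_def by (rule LE_add) (auto simp: algebra_simps)
lemma wt_zero[simp]: "wt 0 = 0" by (simp add: wt_def)
lemma wt_single[simp]: "wt (Poly_Mapping.single w n) = snd w * n" by (simp add: wt_def)

definition tdeg :: "(('n option \<times> nat) \<Rightarrow>\<^sub>0 nat) \<Rightarrow> nat" where "tdeg m = mdeg (tpart m)"
definition tw :: "(('n option \<times> nat) \<Rightarrow>\<^sub>0 nat) \<Rightarrow> nat" where "tw m = wt (tpart m)"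
definition yw :: "(('n option \<times> nat) \<Rightarrow>\<^sub>0 nat) \<Rightarrow> nat" where "yw m = wt (ypart m)"

lemma tdeg_add: "tdeg (a + b) = tdeg a + tdeg b" by (simp add: tdeg_def tpart_add mdeg_add)
lemma tw_add: "tw (a + b) = tw a + tw b" by (simp add: tw_def tpart_add wt_add)
lemma yw_add: "yw (a + b) = yw a + yw b" by (simp add: yw_def ypart_add wt_add)

definition Qm :: "nat \<Rightarrow> nat \<Rightarrow> (('n option \<times> nat) \<Rightarrow>\<^sub>0 nat) \<Rightarrow> bool" where
  "Qm d W m \<longleftrightarrow> tdeg m = d \<and> tw m + yw m = W \<and> tw m < W"

definition good :: "nat \<Rightarrow> nat \<Rightarrow> (('n option \<times> nat) \<Rightarrow>\<^sub>0 nat) \<Rightarrow> ('n option, 'a::field) dpoly \<Rightarrow> bool" where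
  "good d W a f \<longleftrightarrow> tdeg a = d \<and> tw a = W \<and> yw a = 0 \<and>
     (\<exists>R. f = X a + R \<and> (\<forall>m\<in>Poly_Mapping.keys R. Qm d W m))"

lemma good_one: "good 0 0 0 1"
  unfolding good_def by (intro conjI exI[of _ 0]) (auto simp: tdeg_def tw_def yw_def mdeg_def)

lemma keys_mult_X:
  fixes R :: "('n, 'a::field) dpoly"
  shows "m \<in> Poly_Mapping.keys (X a * R) \<Longrightarrow> \<exists>y\<in>Poly_Mapping.keys R. m = a + y"
  using keys_mult[of "X a" R] by auto
lemma keys_mult_X':
  fixes R :: "('n, 'a::field) dpoly"
  shows "m \<in> Poly_Mapping.keys (R * X a) \<Longrightarrow> \<exists>y\<in>Poly_Mapping.keys R. m = y + a"
  using keys_mult[of R "X a"] by auto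

lemma good_mult:
  assumes "good d W a f" "good d' W' a' f'"
  shows "good (d + d') (W + W') (a + a') (f * f')"
proof -
  obtain R where f: "f = X a + R" and R: "\<forall>m\<in>Poly_Mapping.keys R. Qm d W m"
     and a: "tdeg a = d" "tw a = W" "yw a = 0"
    using assms(1) unfolding good_def by blast
  obtain R' where f': "f' = X a' + R'" and R': "\<forall>m\<in>Poly_Mapping.keys R'. Qm d' W' m"
     and a': "tdeg a' = d'" "tw a' = W'" "yw a' = 0"
    using assms(2) unfolding good_def by blast
  define R2 where "R2 = X a * R' + R * X a' + R * R'"
  have eq: "f * f' = X (a + a') + R2"
    by (simp add: f f' R2_def algebra_simps mult_single)
  have "Qm (d + d') (W + W') m" if m: "m \<in> Poly_Mapping.keys R2" for m
  proof -
    have "m \<in> Poly_Mapping.keys (X a * R') \<or> m \<in> Poly_Mapping.keys (R * X a') \<or> m \<in> Poly_Mapping.keys (R * R')"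
      using m keys_add[of "X a * R' + R * X a'" "R * R'"] keys_add[of "X a * R'" "R * X a'"]
      unfolding R2_def by blast
    then show ?thesis
    proof (elim disjE)
      assume "m \<in> Poly_Mapping.keys (X a * R')"
      then obtain y where y: "y \<in> Poly_Mapping.keys R'" "m = a + y" using keys_mult_X by blast
      then show ?thesis using R' a unfolding Qm_def by (auto simp: tdeg_add tw_add yw_add)
    next
      assume "m \<in> Poly_Mapping.keys (R * X a')"
      then obtain y where y: "y \<in> Poly_Mapping.keys R" "m = y + a'" using keys_mult_X' by blast
      then show ?thesis using R a' unfolding Qm_def by (auto simp: tdeg_add tw_add yw_add)
    next
      assume "m \<in> Poly_Mapping.keys (R * R')"
      then obtain x y where y: "x \<in> Poly_Mapping.keys R" "y \<in> Poly_Mapping.keys R'" "m = x + y"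
        using keys_mult[of R R'] by blast
      have "Qm d W x" "Qm d' W' y" using y R R' by auto
      then show ?thesis using y unfolding Qm_def by (simp add: tdeg_add tw_add yw_add)
    qed
  qed
  then show ?thesis unfolding good_def using a a' eq by (auto simp: tdeg_add tw_add yw_add)
qed

lemma good_power:
  assumes "good 1 k (Poly_Mapping.single t 1 + Poly_Mapping.single y 1) f"
  shows "good n (n * k) (Poly_Mapping.single t n + Poly_Mapping.single y n) (f ^ n)"
proof (induction n)
  case 0 then show ?case using good_one by simp
next
  case (Suc n)
  have "good (n + 1) (n * k + k) (Poly_Mapping.single t n + Poly_Mapping.single y n + (Poly_Mapping.single t 1 + Poly_Mapping.single y 1)) (f ^ n * f)"
    by (rule good_mult[OF Suc assms])
  moreover have "Poly_Mapping.single t n + Poly_Mapping.single y n + (Poly_Mapping.single t 1 + Poly_Mapping.single y 1) =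
     Poly_Mapping.single t (Suc n) + Poly_Mapping.single y (Suc n)"
    by (rule poly_mapping_eqI) (simp add: lookup_add lookup_single when_def)
  ultimately show ?case by (simp add: mult.commute add.commute)
qed

lemma good_prod:
  assumes "finite S" "\<forall>s\<in>S. good (dd s) (WW s) (aa s) (ff s)"
  shows "good (\<Sum>s\<in>S. dd s) (\<Sum>s\<in>S. WW s) (\<Sum>s\<in>S. aa s) (\<Prod>s\<in>S. ff s)"
  using assms
proof (induction S rule: finite_induct)
  case empty then show ?case using good_one by simp
next
  case (insert s S)
  then show ?case using good_mult[of "dd s" "WW s" "aa s" "ff s"] by simp
qed



lemma parts_B:
  "tpart (Poly_Mapping.single (None, l) 1 + Poly_Mapping.single (Some i, r) 1) = Poly_Mapping.single (None, l) 1"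
  "ypart (Poly_Mapping.single (None, l) 1 + Poly_Mapping.single (Some i, r) 1) = Poly_Mapping.single (i, r) 1"
  by (simp_all add: tpart_add ypart_add tpart_single ypart_single)

lemma tdeg_B: "tdeg (Poly_Mapping.single (None, l) 1 + Poly_Mapping.single (Some i, r) 1) = 1"
  and tw_B: "tw (Poly_Mapping.single (None, l) 1 + Poly_Mapping.single (Some i, r) 1) = l"
  and yw_B: "yw (Poly_Mapping.single (None, l) 1 + Poly_Mapping.single (Some i, r) 1) = r"
  by (simp_all only: tdeg_def tw_def yw_def parts_B) simp_all

lemma good_sigma:
  assumes df: "differential_field \<delta>"
  shows "good 1 k (Poly_Mapping.single (None, k) 1 + Poly_Mapping.single (Some i, 0) 1)
     ((dp_deriv \<delta> ^^ k) (dp_var None 0 * dp_var (Some i) 0) :: ('n option, 'a::field) dpoly)"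
proof -
  define B where "B l = Poly_Mapping.single (None, l) 1 + Poly_Mapping.single (Some i, k - l) (1::nat)" for l
  have tv: "of_nat c * (tvar l * yvar i (k - l)) = Poly_Mapping.single (B l) (of_nat c :: 'a)" for c l
    by (simp only: tvar_def yvar_def dp_var_def mult_single B_def single_of_nat[symmetric] add_0 mult_1_right)
  have "(dp_deriv \<delta> ^^ k) (dp_var None 0 * dp_var (Some i) 0) =
     (\<Sum>l\<le>k. of_nat (k choose l) * (tvar l * yvar i (k - l)) :: ('n option, 'a) dpoly)"
    using iter_D_formula[OF df, of k i] by (simp only: tvar_def yvar_def)
  also have "\<dots> = (\<Sum>l<Suc k. Poly_Mapping.single (B l) (of_nat (k choose l)))"
    by (simp only: tv lessThan_Suc_atMost)
  also have "\<dots> = X (B k) + (\<Sum>l<k. Poly_Mapping.single (B l) (of_nat (k choose l)))"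
    by (simp only: sum.lessThan_Suc binomial_n_n of_nat_1 add.commute)
  finally have eq: "(dp_deriv \<delta> ^^ k) (dp_var None 0 * dp_var (Some i) 0) =
      X (B k) + (\<Sum>l<k. Poly_Mapping.single (B l) (of_nat (k choose l) :: 'a))" .
  have Q: "Qm 1 k m" if m: "m \<in> Poly_Mapping.keys (\<Sum>l<k. Poly_Mapping.single (B l) (of_nat (k choose l) :: 'a))" for m
  proof -
    obtain l where l: "l < k" "m \<in> Poly_Mapping.keys (Poly_Mapping.single (B l) (of_nat (k choose l) :: 'a))"
      using m keys_sum[of "\<lambda>l. Poly_Mapping.single (B l) (of_nat (k choose l) :: 'a)" "{..<k}"] by blast
    then have "m = B l" by (simp split: if_splits)
    moreover have "Qm 1 k (B l)" using l unfolding Qm_def B_def by (simp only: tdeg_B tw_B yw_B) simp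
    ultimately show ?thesis by simp
  qed
  have a: "tdeg (B k) = 1" "tw (B k) = k" "yw (B k) = 0"
    unfolding B_def by (simp_all only: tdeg_B tw_B yw_B diff_self_eq_0)
  show ?thesis unfolding good_def
    using eq Q a unfolding B_def by (simp only: diff_self_eq_0) blast
qed



definition Lm :: "'n \<Rightarrow> (('n \<times> nat) \<Rightarrow>\<^sub>0 nat) \<Rightarrow> (('n option \<times> nat) \<Rightarrow>\<^sub>0 nat)" where
  "Lm i m = (\<Sum>w\<in>Poly_Mapping.keys m. Poly_Mapping.single (None, snd w) (Poly_Mapping.lookup m w)
                                     + Poly_Mapping.single (Some i, 0) (Poly_Mapping.lookup m w))"

definition sigs :: "('a::field \<Rightarrow> 'a) \<Rightarrow> 'n \<times> nat \<Rightarrow> ('n option, 'a) dpoly" where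
  "sigs \<delta> = (\<lambda>(j, k). (dp_deriv \<delta> ^^ k) (dp_var None 0 * dp_var (Some j) 0))"

lemma scale_eq: "scale_tY \<delta> = dp_subst (sigs \<delta>)"
  by (simp add: scale_tY_def sigs_def)

lemma good_mu:
  assumes df: "differential_field \<delta>" and ki: "\<forall>w\<in>Poly_Mapping.keys m. fst w = i"
  shows "good (mdeg m) (wt m) (Lm i m) (mu (sigs \<delta>) m :: ('n option, 'a::field) dpoly)"
proof -
  have "good (\<Sum>w\<in>Poly_Mapping.keys m. Poly_Mapping.lookup m w) (\<Sum>w\<in>Poly_Mapping.keys m. Poly_Mapping.lookup m w * snd w)
      (Lm i m) (\<Prod>w\<in>Poly_Mapping.keys m. sigs \<delta> w ^ Poly_Mapping.lookup m w :: ('n option, 'a) dpoly)"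
    unfolding Lm_def
  proof (rule good_prod)
    show "\<forall>w\<in>Poly_Mapping.keys m. good (Poly_Mapping.lookup m w) (Poly_Mapping.lookup m w * snd w)
      (Poly_Mapping.single (None, snd w) (Poly_Mapping.lookup m w) + Poly_Mapping.single (Some i, 0) (Poly_Mapping.lookup m w))
      (sigs \<delta> w ^ Poly_Mapping.lookup m w :: ('n option, 'a) dpoly)"
    proof
      fix w assume w: "w \<in> Poly_Mapping.keys m"
      have "w = (i, snd w)" using ki w by (metis prod.collapse)
      then have "sigs \<delta> w = ((dp_deriv \<delta> ^^ snd w) (dp_var None 0 * dp_var (Some i) 0) :: ('n option, 'a) dpoly)"
        unfolding sigs_def by (metis case_prod_conv)
      then show "good (Poly_Mapping.lookup m w) (Poly_Mapping.lookup m w * snd w)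
      (Poly_Mapping.single (None, snd w) (Poly_Mapping.lookup m w) + Poly_Mapping.single (Some i, 0) (Poly_Mapping.lookup m w))
      (sigs \<delta> w ^ Poly_Mapping.lookup m w :: ('n option, 'a) dpoly)"
        using good_power[OF good_sigma[OF df, of "snd w" i]] by simp
    qed
  qed simp
  then show ?thesis by (simp add: mdeg_def wt_def LE_def mu_def mult.commute)
qed

lemma tpart_Lm:
  assumes ki: "\<forall>w\<in>Poly_Mapping.keys m. fst w = i"
  shows "Poly_Mapping.lookup (tpart (Lm i m)) (None, k) = Poly_Mapping.lookup m (i, k)"
proof -
  have "tpart (Lm i m) = (\<Sum>w\<in>Poly_Mapping.keys m. Poly_Mapping.single (None, snd w) (Poly_Mapping.lookup m w))"
    unfolding Lm_def by (subst hom_sum[where h=tpart]) (auto simp: tpart_add tpart_single)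
  then have "Poly_Mapping.lookup (tpart (Lm i m)) (None, k) =
      (\<Sum>w\<in>Poly_Mapping.keys m. if snd w = k then Poly_Mapping.lookup m w else 0)"
    by (auto simp: lookup_sum lookup_single when_def intro!: sum.cong)
  also have "\<dots> = (\<Sum>w\<in>Poly_Mapping.keys m. if w = (i, k) then Poly_Mapping.lookup m w else 0)"
  proof (rule sum.cong[OF refl])
    fix w assume "w \<in> Poly_Mapping.keys m"
    then have "fst w = i" using ki by blast
    then have "(snd w = k) = (w = (i, k))" by (cases w) auto
    then show "(if snd w = k then Poly_Mapping.lookup m w else 0) = (if w = (i, k) then Poly_Mapping.lookup m w else 0)"
      by simp
  qed
  also have "\<dots> = Poly_Mapping.lookup m (i, k)"
    by (simp add: in_keys_iff)
  finally show ?thesis .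
qed

lemma ypart_Lm: "ypart (Lm i m) = Poly_Mapping.single (i, 0) (mdeg m)"
proof -
  have "ypart (Lm i m) = (\<Sum>w\<in>Poly_Mapping.keys m. Poly_Mapping.single (i, 0) (Poly_Mapping.lookup m w))"
    unfolding Lm_def by (subst hom_sum[where h=ypart]) (auto simp: ypart_add ypart_single)
  also have "\<dots> = Poly_Mapping.single (i, 0) (\<Sum>w\<in>Poly_Mapping.keys m. Poly_Mapping.lookup m w)"
    by (rule hom_sum[symmetric]) (auto simp: single_add)
  finally show ?thesis by (simp add: mdeg_def LE_def)
qed

lemma Lm_inj:
  fixes m m' :: "('n \<times> nat) \<Rightarrow>\<^sub>0 nat"
  assumes "\<forall>w\<in>Poly_Mapping.keys m. fst w = i" "\<forall>w\<in>Poly_Mapping.keys m'. fst w = i"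
    and "tpart (Lm i m) = tpart (Lm i m')"
  shows "m = m'"
proof (rule poly_mapping_eqI)
  fix x :: "'n \<times> nat"
  obtain j k where x: "x = (j, k)" by (cases x)
  show "Poly_Mapping.lookup m x = Poly_Mapping.lookup m' x"
  proof (cases "j = i")
    case True
    then show ?thesis using tpart_Lm[OF assms(1), of k] tpart_Lm[OF assms(2), of k] assms(3) x by simp
  next
    case False
    then show ?thesis using assms(1,2) x by (metis fst_conv in_keys_iff)
  qed
qed

lemma Lam_zero_keys: "(\<forall>z\<in>Poly_Mapping.keys g. tpart z \<noteq> T) \<Longrightarrow> Lam T g = 0"
  unfolding Lam_def LE_def by (intro sum.neutral) auto

lemma lead:
  assumes df: "differential_field \<delta>" and p: "p \<in> dp_sub {i}" "p \<noteq> 0"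
  shows "\<exists>T c d. c \<noteq> 0 \<and> Lam T (scale_tY \<delta> p :: ('n option, 'a::field) dpoly) =
      Poly_Mapping.single (Poly_Mapping.single (i, 0) d) c"
proof -
  have ki: "\<forall>w\<in>Poly_Mapping.keys m. fst w = i" if "m \<in> Poly_Mapping.keys p" for m
    using p(1) that by (simp add: dp_sub_def)
  obtain m0 where m0: "m0 \<in> Poly_Mapping.keys p" using p(2) by (metis keys_eq_empty ex_in_conv)
  define d where "d = mdeg m0"
  define S where "S = {m\<in>Poly_Mapping.keys p. mdeg m = d}"
  have finS: "finite S" unfolding S_def by simp
  have neS: "S \<noteq> {}" using m0 unfolding S_def d_def by auto
  have "Max (wt ` S) \<in> wt ` S" using finS neS by simp
  then obtain ms where ms: "ms \<in> S" "wt ms = Max (wt ` S)" by (metis imageE)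
  have msmax: "wt m \<le> wt ms" if "m \<in> S" for m
    using ms(2) finS that by simp
  have msk: "ms \<in> Poly_Mapping.keys p" "mdeg ms = d" using ms(1) unfolding S_def by auto
  define T where "T = tpart (Lm i ms)"
  have gms: "good (mdeg ms) (wt ms) (Lm i ms) (mu (sigs \<delta>) ms :: ('n option, 'a) dpoly)"
    using good_mu[OF df ki[OF msk(1)]] .
  then have Tdeg: "mdeg T = d" and Tw: "wt T = wt ms"
    unfolding good_def T_def tdeg_def tw_def using msk by auto
  have each: "Lam T (dp_const (Poly_Mapping.lookup p m) * mu (sigs \<delta>) m :: ('n option, 'a) dpoly) =
      (if m = ms then Poly_Mapping.single (Poly_Mapping.single (i, 0) d) (Poly_Mapping.lookup p m) else 0)"
    if m: "m \<in> Poly_Mapping.keys p" for m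
  proof -
    obtain R where mu: "mu (sigs \<delta>) m = X (Lm i m) + (R :: ('n option, 'a) dpoly)"
      and QR: "\<forall>z\<in>Poly_Mapping.keys R. Qm (mdeg m) (wt m) z"
      using good_mu[OF df ki[OF m]] unfolding good_def by blast
    have R0: "Lam T (dp_const (Poly_Mapping.lookup p m) * R) = 0"
    proof (rule Lam_zero_keys, rule ballI)
      fix z assume "z \<in> Poly_Mapping.keys (dp_const (Poly_Mapping.lookup p m) * R)"
      then have z: "z \<in> Poly_Mapping.keys R" using keys_const_mult by blast
      show "tpart z \<noteq> T"
      proof
        assume tz: "tpart z = T"
        have Q: "Qm (mdeg m) (wt m) z" using QR z by blast
        then have "mdeg m = d" using tz Tdeg unfolding Qm_def tdeg_def by simp
        then have "m \<in> S" using m unfolding S_def by simp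
        then have "wt m \<le> wt ms" by (rule msmax)
        moreover have "tw z < wt m" using Q unfolding Qm_def by simp
        moreover have "tw z = wt ms" using tz Tw unfolding tw_def by simp
        ultimately show False by simp
      qed
    qed
    have "Lam T (dp_const (Poly_Mapping.lookup p m) * mu (sigs \<delta>) m) =
        Lam T (Poly_Mapping.single (Lm i m) (Poly_Mapping.lookup p m))"
      by (simp add: mu ring_distribs Lam_add R0 single_split[symmetric])
    also have "\<dots> = (if m = ms then Poly_Mapping.single (Poly_Mapping.single (i, 0) d) (Poly_Mapping.lookup p m) else 0)"
    proof -
      have "tpart (Lm i m) = T \<longleftrightarrow> m = ms"
        using Lm_inj[OF ki[OF m] ki[OF msk(1)]] unfolding T_def by blast
      then show ?thesis by (simp add: Lam_single ypart_Lm msk(2))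
    qed
    finally show ?thesis .
  qed
  have "scale_tY \<delta> p = (\<Sum>m\<in>Poly_Mapping.keys p. dp_const (Poly_Mapping.lookup p m) * mu (sigs \<delta>) m :: ('n option, 'a) dpoly)"
    by (simp add: scale_eq subst_LE LE_def)
  then have "Lam T (scale_tY \<delta> p :: ('n option, 'a) dpoly) =
      (\<Sum>m\<in>Poly_Mapping.keys p. if m = ms then Poly_Mapping.single (Poly_Mapping.single (i, 0) d) (Poly_Mapping.lookup p m) else 0)"
    by (simp add: Lam_sum each)
  also have "\<dots> = Poly_Mapping.single (Poly_Mapping.single (i, 0) d) (Poly_Mapping.lookup p ms)"
    using msk(1) by simp
  finally show ?thesis using msk(1) by (auto simp: in_keys_iff)
qed



lemma var_power: "dp_var i 0 ^ d = (X (Poly_Mapping.single (i, 0) d) :: ('n, 'a::field) dpoly)"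
proof (induction d)
  case 0 then show ?case by simp
next
  case (Suc d)
  have "dp_var i 0 ^ Suc d = dp_var i 0 ^ d * (dp_var i 0 :: ('n, 'a) dpoly)" by (rule power_Suc2)
  also have "\<dots> = X (Poly_Mapping.single (i, 0) d) * X (Poly_Mapping.single (i, 0) 1)"
    by (simp only: Suc.IH) (simp only: dp_var_def)
  also have "\<dots> = X (Poly_Mapping.single (i, 0) d + Poly_Mapping.single (i, 0) 1)"
    by (simp only: mult_single mult_1)
  also have "\<dots> = X (Poly_Mapping.single (i, 0) (Suc d))"
    by (simp only: single_add[symmetric] Suc_eq_plus1)
  finally show ?case .
qed

lemma prime_pow:
  assumes "is_prime_ideal I" "x ^ d \<in> I"
  shows "x \<in> I"
  using assms(2)
proof (induction d)
  case 0
  have m: "\<forall>r. \<forall>a\<in>I. r * a \<in> I" using assms(1) unfolding is_prime_ideal_def is_ideal_def by simp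
  have "x * 1 \<in> I" using m 0 unfolding power_0 by blast
  then show ?case by simp
next
  case (Suc d)
  have "x * x ^ d \<in> I" using Suc.prems by simp
  moreover have "\<forall>a b. a * b \<in> I \<longrightarrow> a \<in> I \<or> b \<in> I" using assms(1) unfolding is_prime_ideal_def by simp
  ultimately have "x \<in> I \<or> x ^ d \<in> I" by blast
  then show ?case using Suc.IH by blast
qed

theorem mainTheorem2:
  fixes \<delta> :: "'a::field \<Rightarrow> 'a"
    and I :: "('n::finite, 'a) dpoly set"
  assumes "differential_field \<delta>"
    and "is_diff_ideal \<delta> I"
    and "is_prime_ideal I"
    and "I \<noteq> UNIV"
    and "diff_homogeneous \<delta> I"
  shows "(\<forall>U. parametric_set I U \<longrightarrow> U \<noteq> {}) \<and> (\<exists>i. I \<inter> dp_sub {i} = {0})"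
proof -
  note df = assms(1)
  have idl: "is_ideal I" using assms(2) unfolding is_diff_ideal_def by simp
  have I0: "0 \<in> I" using idl unfolding is_ideal_def by simp
  have sub0: "0 \<in> dp_sub U" for U :: "'n set" by (simp add: dp_sub_def)
  have second: "\<exists>i. I \<inter> dp_sub {i} = {0}"
  proof (rule ccontr)
    assume nc: "\<not> (\<exists>i. I \<inter> dp_sub {i} = {0})"
    have yI: "dp_var i 0 \<in> I" for i
    proof -
      have "I \<inter> dp_sub {i} \<noteq> {0}" using nc by blast
      then obtain p where p: "p \<in> I" "p \<in> dp_sub {i}" "p \<noteq> 0" using I0 sub0 by blast
      have "scale_tY \<delta> p \<in> diff_ideal_gen \<delta> (embed_tY ` I)"
        using assms(5) p(1) unfolding diff_homogeneous_def by blast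
      then have sJ: "scale_tY \<delta> p \<in> Jgen I" using diff_ideal_Jgen[OF df assms(2)] by blast
      obtain T c d where cd: "c \<noteq> 0" "Lam T (scale_tY \<delta> p) = Poly_Mapping.single (Poly_Mapping.single (i, 0) d) c"
        using lead[OF df p(2,3)] by blast
      have "Poly_Mapping.single (Poly_Mapping.single (i, 0) d) c \<in> I"
        using Lam_Jgen[OF idl sJ, of T] cd(2) by simp
      then have "dp_const (inverse c) * Poly_Mapping.single (Poly_Mapping.single (i, 0) d) c \<in> I"
        using idl unfolding is_ideal_def by blast
      moreover have "dp_const (inverse c) * Poly_Mapping.single (Poly_Mapping.single (i, 0) d) c = dp_var i 0 ^ d"
        using cd(1) by (simp add: var_power dp_const_def mult_single)
      ultimately have "dp_var i 0 ^ d \<in> I" by simp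
      then show ?thesis using prime_pow[OF assms(3)] by blast
    qed
    have "1 \<in> colon_vars I" unfolding colon_vars_def using yI by simp
    then have one: "1 \<in> I" using assms(5) unfolding diff_homogeneous_def by simp
    have "r \<in> I" for r using idl one unfolding is_ideal_def by (metis mult_1_right)
    then show False using assms(4) by blast
  qed
  moreover have "\<forall>U. parametric_set I U \<longrightarrow> U \<noteq> {}"
  proof (intro allI impI notI)
    fix U assume pU: "parametric_set I U" and U: "U = {}"
    obtain i where i: "I \<inter> dp_sub {i} = {0}" using second by blast
    have "U \<subset> {i}" using U by blast
    then have "\<not> diff_indep_mod I {i}" using pU unfolding parametric_set_def by blast
    then show False using i unfolding diff_indep_mod_def by simp
  qed
  ultimately show ?thesis by blast
qed

end
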